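(* Let $T$ be a tree of order $n(T)\geq 3$ with $l(T)$ leaves, and suppose $(T,S)\in\mathscr{T}_1$ for some labeling $S=(S_A,S_B,S_C,S_D)$. Then $\gamma^{d}_2(T)=|S_A|=\frac{n(T)-l(T)+3}{4}$, and $S_A$ is the unique $\gamma^{d}_2$-set of $T$.
   Context: Graphs are finite and simple. For a vertex $v$ of a graph $G$, $N(v)$ is its open neighborhood, $N[v]=N(v)\cup\{v\}$, $d(v)=|N(v)|$, and $d(u,v)$ denotes distance. A leaf is a vertex of degree $1$; a support vertex is a vertex adjacent to a leaf. For a tree $T$, $l(T)$ and $s(T)$ denote the numbers of leaves and of support vertices, and $n(T)$ its order. A set $D\subseteq V(G)$ is a disjunctive dominating set ($2DD$-set) of $G$ if every vertex $v\notin D$ either has a neighbor in $D$ or has at least two vertices of $D$ at distance exactly $2$ from it. The disjunctive domination number $\gamma^{d}_2(G)$ is the minimum size of a $2DD$-set; a $2DD$-set of that size is a $\gamma^d_2$-set. Labeled trees: a labeling of a tree $T$ is a partition $S=(S_A,S_B,S_C,S_D)$ of $V(T)$ into four (possibly empty) sets; the status $\mathrm{sta}(v)\in\{A,B,C,D\}$ is the letter $x$ with $v\in S_x$. Operation $\mathscr{O}_1$: choose a vertex $v$ with $\mathrm{sta}(v)=A$; add a new vertex $u$ and the edge $uv$, with $\mathrm{sta}(u)=C$. Operation $\mathscr{O}_3$: choose a vertex $v$ with $\mathrm{sta}(v)=C$ and $d(v)=1$; add a new path $u_1u_2u_3u_4$ and the edge $u_1v$, with $\mathrm{sta}(u_1)=D$,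 $\mathrm{sta}(u_2)=B$, $\mathrm{sta}(u_3)=A$, $\mathrm{sta}(u_4)=C$. (Existing vertices keep their statuses.) $\mathscr{T}_1$ is the smallest family of labeled trees that contains $(P_3,S')$, where $S'$ gives both leaves of $P_3$ status $C$ and the central vertex status $A$, and is closed under $\mathscr{O}_1$ and $\mathscr{O}_3$. *)

theory Defs
  imports Complex_Main
begin

definition simple_graph :: "'a set \<Rightarrow> 'a set set \<Rightarrow> bool" where
  "simple_graph V E \<longleftrightarrow> finite V \<and> (\<forall>e\<in>E. \<exists>u v. u \<in> V \<and> v \<in> V \<and> u \<noteq> v \<and> e = {u, v})"

definition adj :: "'a set set \<Rightarrow> 'a \<Rightarrow> 'a \<Rightarrow> bool" where
  "adj E u v \<longleftrightarrow> {u, v} \<in> E"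

definition nbhd :: "'a set set \<Rightarrow> 'a \<Rightarrow> 'a set" where
  "nbhd E v = {u. adj E v u}"

definition deg :: "'a set set \<Rightarrow> 'a \<Rightarrow> nat" where
  "deg E v = card (nbhd E v)"

definition connected_graph :: "'a set \<Rightarrow> 'a set set \<Rightarrow> bool" where
  "connected_graph V E \<longleftrightarrow>
     (\<forall>u\<in>V. \<forall>v\<in>V. (u, v) \<in> ({(x, y). x \<in> V \<and> y \<in> V \<and> adj E x y})\<^sup>*)"

definition is_tree :: "'a set \<Rightarrow> 'a set set \<Rightarrow> bool" where
  "is_tree V E \<longleftrightarrow> simple_graph V E \<and> V \<noteq> {} \<and> connected_graph V E \<and> card E + 1 = card V"

definition leaves :: "'a set \<Rightarrow> 'a set set \<Rightarrow> 'a set" where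
  "leaves V E = {v \<in> V. deg E v = 1}"

definition dist2 :: "'a set \<Rightarrow> 'a set set \<Rightarrow> 'a \<Rightarrow> 'a \<Rightarrow> bool" where
  "dist2 V E u w \<longleftrightarrow> u \<noteq> w \<and> \<not> adj E u w \<and> (\<exists>x\<in>V. adj E u x \<and> adj E x w)"

definition is_2DD :: "'a set \<Rightarrow> 'a set set \<Rightarrow> 'a set \<Rightarrow> bool" where
  "is_2DD V E D \<longleftrightarrow> D \<subseteq> V \<and>
     (\<forall>v\<in>V - D. (\<exists>u\<in>D. adj E v u) \<or> card {w \<in> D. dist2 V E v w} \<ge> 2)"

definition gamma_d2 :: "'a set \<Rightarrow> 'a set set \<Rightarrow> nat" where
  "gamma_d2 V E = Min {card D | D. is_2DD V E D}"

definition is_gamma_d2_set :: "'a set \<Rightarrow> 'a set set \<Rightarrow> 'a set \<Rightarrow> bool" where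
  "is_gamma_d2_set V E D \<longleftrightarrow> is_2DD V E D \<and> card D = gamma_d2 V E"

datatype status = SA | SB | SC | SD

text \<open>Labeled trees (V, E, sta); only the values of sta on V matter.\<close>
inductive T1 :: "'a set \<Rightarrow> 'a set set \<Rightarrow> ('a \<Rightarrow> status) \<Rightarrow> bool" where
  base: "\<lbrakk> distinct [a, b, c]; sta a = SC; sta b = SA; sta c = SC \<rbrakk>
         \<Longrightarrow> T1 {a, b, c} {{a, b}, {b, c}} sta"
| op1: "\<lbrakk> T1 V E sta; v \<in> V; sta v = SA; u \<notin> V;
          \<forall>x\<in>V. sta' x = sta x; sta' u = SC \<rbrakk>
         \<Longrightarrow> T1 (insert u V) (insert {u, v} E) sta'"
| op3: "\<lbrakk> T1 V E sta; v \<in> V; sta v = SC; deg E v = 1;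
          distinct [u1, u2, u3, u4]; u1 \<notin> V; u2 \<notin> V; u3 \<notin> V; u4 \<notin> V;
          \<forall>x\<in>V. sta' x = sta x;
          sta' u1 = SD; sta' u2 = SB; sta' u3 = SA; sta' u4 = SC \<rbrakk>
         \<Longrightarrow> T1 (V \<union> {u1, u2, u3, u4}) (E \<union> {{u1, v}, {u1, u2}, {u2, u3}, {u3, u4}}) sta'"

end

theory Submission
  imports Defs
begin

definition SAs :: "'a set \<Rightarrow> ('a \<Rightarrow> status) \<Rightarrow> 'a set" where
  "SAs V sta = {v\<in>V. sta v = SA}"

definition domd :: "'a set \<Rightarrow> 'a set set \<Rightarrow> 'a set \<Rightarrow> 'a \<Rightarrow> bool" where
  "domd V E D x \<longleftrightarrow> (\<exists>u\<in>D. adj E x u) \<or> 2 \<le> card {w \<in> D. dist2 V E x w}"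

definition ein :: "'a set \<Rightarrow> 'a set set \<Rightarrow> bool" where
  "ein V E \<longleftrightarrow> (\<forall>x y. adj E x y \<longrightarrow> x \<in> V \<and> y \<in> V \<and> x \<noteq> y)"

lemma einD: "ein V E \<Longrightarrow> adj E x y \<Longrightarrow> x \<in> V \<and> y \<in> V \<and> x \<noteq> y"
  unfolding ein_def by blast

lemma is_2DD_dom: "is_2DD V E D \<longleftrightarrow> D \<subseteq> V \<and> (\<forall>x\<in>V - D. domd V E D x)"
  unfolding is_2DD_def domd_def by auto

lemma adj_insert: "adj (insert {a,b} E) x y \<longleftrightarrow> adj E x y \<or> (x=a \<and> y=b) \<or> (x=b \<and> y=a)"
  by (auto simp: adj_def doubleton_eq_iff)

lemma adj_sym: "adj E x y \<longleftrightarrow> adj E y x"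
  by (simp add: adj_def insert_commute)

lemma dom_mono:
  assumes "domd V E D x" "V \<subseteq> V'" "\<And>a b. adj E a b \<Longrightarrow> adj E' a b"
    "\<And>b. b \<in> D \<Longrightarrow> adj E' x b \<Longrightarrow> adj E x b" "D \<subseteq> D'" "finite D'"
  shows "domd V' E' D' x"
proof -
  from assms(1) consider (a) "\<exists>y\<in>D. adj E x y" | (b) "2 \<le> card {w \<in> D. dist2 V E x w}"
    unfolding domd_def by auto
  then show ?thesis
  proof cases
    case a then show ?thesis using assms unfolding domd_def by blast
  next
    case b
    have "{w \<in> D. dist2 V E x w} \<subseteq> {w \<in> D'. dist2 V' E' x w}"
      using assms(2-5) unfolding dist2_def by blast
    then have "card {w \<in> D. dist2 V E x w} \<le> card {w \<in> D'. dist2 V' E' x w}"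
      by (rule card_mono[rotated]) (use assms(6) in auto)
    then show ?thesis using b unfolding domd_def by auto
  qed
qed

lemma L1:
  assumes ein: "ein V E" and fin: "finite V" and v: "v \<in> V" and u: "u \<notin> V"
    and D': "is_2DD (insert u V) (insert {u,v} E) D'"
  shows "is_2DD V E (if u \<in> D' then insert v (D' - {u}) else D')"
proof -
  define D where "D = (if u \<in> D' then insert v (D' - {u}) else D')"
  define V' where "V' = insert u V"
  define E' where "E' = insert {u,v} E"
  have adjE': "adj E' x y \<longleftrightarrow> adj E x y \<or> (x=u \<and> y=v) \<or> (x=v \<and> y=u)" for x y
    unfolding E'_def by (simp add: adj_insert)
  have uv: "u \<noteq> v" using u v by auto
  have noadju: "\<not> adj E x u" for x using einD[OF ein, of x u] u by auto
  have noadju2: "\<not> adj E u x" for x using einD[OF ein, of u x] u by auto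
  have DV: "D \<subseteq> V" using D' v unfolding D_def is_2DD_def by auto
  have sub: "D' - {u} \<subseteq> D" unfolding D_def by auto
  have finD: "finite D" using DV fin finite_subset by blast
  have "domd V E D x" if x: "x \<in> V" "x \<notin> D" for x
  proof -
    have xu: "x \<noteq> u" using x u by auto
    have xD': "x \<notin> D'" using x sub xu by auto
    have "domd V' E' D' x" using D' x xD' unfolding is_2DD_dom V'_def E'_def by auto
    then consider (a) "\<exists>y\<in>D'. adj E' x y" | (b) "2 \<le> card {w \<in> D'. dist2 V' E' x w}"
      unfolding domd_def by auto
    then show ?thesis
    proof cases
      case a
      then obtain y where y: "y \<in> D'" "adj E' x y" by auto
      show ?thesis
      proof (cases "y = u")
        case True
        then have "x = v" using y(2) adjE' noadju xu by auto
        moreover have "v \<in> D" using True y(1) unfolding D_def by auto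
        ultimately show ?thesis using x by auto
      next
        case False
        then have "adj E x y" using y(2) xu adjE' by auto
        moreover have "y \<in> D" using sub y(1) False by auto
        ultimately show ?thesis unfolding domd_def by auto
      qed
    next
      case b
      show ?thesis
      proof (cases "u \<in> D' \<and> dist2 V' E' x u")
        case True
        then obtain z where z: "adj E' x z" "adj E' z u" unfolding dist2_def by auto
        have "z = v" using z(2) adjE' noadju uv by auto
        then have "adj E x v" using z(1) adjE' xu uv by auto
        moreover have "v \<in> D" using True unfolding D_def by auto
        ultimately show ?thesis unfolding domd_def by auto
      next
        case False
        have "{w \<in> D'. dist2 V' E' x w} \<subseteq> {w \<in> D. dist2 V E x w}"
        proof
          fix w assume w: "w \<in> {w \<in> D'. dist2 V' E' x w}"
          then have wu: "w \<noteq> u" using False by auto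
          then have wD: "w \<in> D" using sub w by auto
          have d: "x \<noteq> w" "\<not> adj E' x w" and "\<exists>z\<in>V'. adj E' x z \<and> adj E' z w"
            using w unfolding dist2_def by auto
          then obtain z where z: "z \<in> V'" "adj E' x z" "adj E' z w" by auto
          have zu: "z \<noteq> u"
          proof
            assume "z = u"
            then have "x = v" "w = v" using z adjE' noadju noadju2 xu wu by auto
            then show False using d by auto
          qed
          have "adj E x z" "adj E z w" using z(2,3) adjE' xu zu wu by auto
          moreover have "z \<in> V" using z(1) zu unfolding V'_def by auto
          moreover have "\<not> adj E x w" using d adjE' by auto
          ultimately show "w \<in> {w \<in> D. dist2 V E x w}" using wD d unfolding dist2_def by auto
        qed
        then have "card {w \<in> D'. dist2 V' E' x w} \<le> card {w \<in> D. dist2 V E x w}"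
          by (rule card_mono[rotated]) (use finD in auto)
        then show ?thesis using b unfolding domd_def by auto
      qed
    qed
  qed
  then show ?thesis using DV unfolding is_2DD_dom D_def by auto
qed


lemma L3:
  assumes ein: "ein V E" and fin: "finite V" and v: "v \<in> V"
    and dist: "distinct [u1,u2,u3,u4]" and n: "u1\<notin>V" "u2\<notin>V" "u3\<notin>V" "u4\<notin>V"
    and D': "is_2DD (V \<union> {u1,u2,u3,u4}) (E \<union> {{u1,v},{u1,u2},{u2,u3},{u3,u4}}) D'"
  shows "is_2DD V E ((D' \<inter> V) \<union> (if u1 \<in> D' \<or> u2 \<in> D' then {v} else {}))"
    and "u3 \<in> D' \<or> u4 \<in> D'"
proof -
  define D where "D = (D' \<inter> V) \<union> (if u1 \<in> D' \<or> u2 \<in> D' then {v} else {})"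
  define V' where "V' = V \<union> {u1,u2,u3,u4}"
  define E' where "E' = E \<union> {{u1,v},{u1,u2},{u2,u3},{u3,u4}}"
  have E'eq: "E' = insert {u1,v} (insert {u1,u2} (insert {u2,u3} (insert {u3,u4} E)))"
    unfolding E'_def by auto
  have adjE': "adj E' x y \<longleftrightarrow> adj E x y \<or> (x=u1\<and>y=v)\<or>(x=v\<and>y=u1)\<or>(x=u1\<and>y=u2)\<or>(x=u2\<and>y=u1)
     \<or>(x=u2\<and>y=u3)\<or>(x=u3\<and>y=u2)\<or>(x=u3\<and>y=u4)\<or>(x=u4\<and>y=u3)" for x y
    unfolding E'eq by (simp add: adj_insert) blast
  have inV: "adj E a b \<Longrightarrow> a \<in> V \<and> b \<in> V" for a b using einD[OF ein] by blast
  have d: "u1 \<noteq> u2" "u1 \<noteq> u3" "u1 \<noteq> u4" "u2 \<noteq> u3" "u2 \<noteq> u4" "u3 \<noteq> u4" using dist by auto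
  have nv: "v \<noteq> u1" "v \<noteq> u2" "v \<noteq> u3" "v \<noteq> u4" using v n by auto
  have D'V': "D' \<subseteq> V'" using D' unfolding is_2DD_def V'_def by auto
  have finD: "finite D" unfolding D_def using fin by auto
  show u34: "u3 \<in> D' \<or> u4 \<in> D'"
  proof (rule ccontr)
    assume c: "\<not> (u3 \<in> D' \<or> u4 \<in> D')"
    then have "domd V' E' D' u4" using D' unfolding is_2DD_dom V'_def E'_def by auto
    moreover have "\<not> adj E' u4 y" if "y \<in> D'" for y
      using that c adjE'[of u4 y] inV[of u4 y] n d nv by auto
    moreover have "{w \<in> D'. dist2 V' E' u4 w} \<subseteq> {u2}"
    proof
      fix w assume w: "w \<in> {w \<in> D'. dist2 V' E' u4 w}"
      then obtain z where z: "adj E' u4 z" "adj E' z w" "w \<noteq> u4" unfolding dist2_def by auto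
      have "z = u3" using z(1) adjE'[of u4 z] inV[of u4 z] n d nv by auto
      then show "w \<in> {u2}" using z(2,3) adjE'[of u3 w] inV[of u3 w] n d nv by auto
    qed
    then have "card {w \<in> D'. dist2 V' E' u4 w} \<le> card {u2}"
      by (intro card_mono) auto
    then have "card {w \<in> D'. dist2 V' E' u4 w} \<le> 1" by simp
    ultimately show False unfolding domd_def by auto
  qed
  have DV: "D \<subseteq> V" unfolding D_def using v by auto
  have "domd V E D x" if x: "x \<in> V" "x \<notin> D" for x
  proof -
    have xn: "x \<noteq> u1" "x \<noteq> u2" "x \<noteq> u3" "x \<noteq> u4" using x n by auto
    have xD': "x \<notin> D'" using x unfolding D_def by auto
    have "domd V' E' D' x" using D' x xD' unfolding is_2DD_dom V'_def E'_def by auto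
    then consider (a) "\<exists>y\<in>D'. adj E' x y" | (b) "2 \<le> card {w \<in> D'. dist2 V' E' x w}"
      unfolding domd_def by auto
    then show ?thesis
    proof cases
      case a
      then obtain y where y: "y \<in> D'" "adj E' x y" by auto
      show ?thesis
      proof (cases "y = u1")
        case True
        then have "x = v" using y(2) adjE'[of x y] inV[of x y] n xn d d nv by auto
        moreover have "v \<in> D" using True y(1) unfolding D_def by auto
        ultimately show ?thesis using x by auto
      next
        case False
        then have "adj E x y" using y(2) xn adjE'[of x y] d nv by auto
        moreover have "y \<in> D" using y(1) False inV[OF \<open>adj E x y\<close>] unfolding D_def by auto
        ultimately show ?thesis unfolding domd_def by auto
      qed
    next
      case b
      show ?thesis
      proof (cases "u1 \<in> D' \<and> dist2 V' E' x u1")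
        case True
        then obtain z where z: "adj E' x z" "adj E' z u1" unfolding dist2_def by auto
        have "z = v \<or> z = u2" using z(2) adjE'[of z u1] inV[of z u1] n d nv by auto
        moreover have "z \<noteq> u2" using z(1) adjE'[of x z] inV[of x z] n xn d d nv by auto
        ultimately have "z = v" by auto
        then have "adj E x v" using z(1) adjE'[of x z] xn nv d nv by auto
        moreover have "v \<in> D" using True unfolding D_def by auto
        ultimately show ?thesis unfolding domd_def by auto
      next
        case F1: False
        show ?thesis
        proof (cases "u2 \<in> D' \<and> dist2 V' E' x u2")
          case True
          then obtain z where z: "adj E' x z" "adj E' z u2" unfolding dist2_def by auto
          have "z = u1 \<or> z = u3" using z(2) adjE'[of z u2] inV[of z u2] n d nv by auto
          then have "x = v" using z(1) adjE'[of x z] inV[of x z] n xn d d nv by auto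
          moreover have "v \<in> D" using True unfolding D_def by auto
          ultimately show ?thesis using x by auto
        next
          case F2: False
          have "{w \<in> D'. dist2 V' E' x w} \<subseteq> {w \<in> D. dist2 V E x w}"
          proof
            fix w assume w: "w \<in> {w \<in> D'. dist2 V' E' x w}"
            then have w12: "w \<noteq> u1" "w \<noteq> u2" using F1 F2 by auto
            have dd: "x \<noteq> w" "\<not> adj E' x w" and "\<exists>z\<in>V'. adj E' x z \<and> adj E' z w"
              using w unfolding dist2_def by auto
            then obtain z where z: "z \<in> V'" "adj E' x z" "adj E' z w" by auto
            have xz: "adj E x z \<or> z = u1" using z(2) adjE'[of x z] xn d nv by auto
            have w34: "w \<noteq> u3 \<and> w \<noteq> u4"
            proof
              show "w \<noteq> u3"
              proof
                assume "w = u3"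
                then have "z = u2 \<or> z = u4" using z(3) adjE'[of z w] inV[of z w] n d nv by auto
                then show False using xz inV[of x z] n d by auto
              qed
              show "w \<noteq> u4"
              proof
                assume "w = u4"
                then have "z = u3" using z(3) adjE'[of z w] inV[of z w] n d nv by auto
                then show False using xz inV[of x z] n d by auto
              qed
            qed
            have wV: "w \<in> V" using w w12 w34 D'V' unfolding V'_def by auto
            have zu1: "z \<noteq> u1"
            proof
              assume "z = u1"
              then have "w = v" using z(3) adjE'[of z w] inV[of z w] n w12 d nv by auto
              moreover have "x = v" using \<open>z = u1\<close> z(2) adjE'[of x z] inV[of x z] n xn d nv by auto
              ultimately show False using dd by auto
            qed
            have "adj E x z" using xz zu1 by auto
            moreover have "adj E z w" using z(3) adjE'[of z w] zu1 w12 w34 inV[OF \<open>adj E x z\<close>] n d nv by auto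
            moreover have "\<not> adj E x w" using dd adjE' by auto
            moreover have "w \<in> D" using w wV unfolding D_def by auto
            ultimately show "w \<in> {w \<in> D. dist2 V E x w}"
              using dd inV[of x z] unfolding dist2_def by auto
          qed
          then have "card {w \<in> D'. dist2 V' E' x w} \<le> card {w \<in> D. dist2 V E x w}"
            by (rule card_mono[rotated]) (use finD in auto)
          then show ?thesis using b unfolding domd_def by auto
        qed
      qed
    qed
  qed
  then have "is_2DD V E D" using DV unfolding is_2DD_dom by auto
  then show "is_2DD V E ((D' \<inter> V) \<union> (if u1 \<in> D' \<or> u2 \<in> D' then {v} else {}))"
    unfolding D_def .
qed


definition Inv :: "'a set \<Rightarrow> 'a set set \<Rightarrow> ('a \<Rightarrow> status) \<Rightarrow> bool" where
 "Inv V E sta \<longleftrightarrow> finite V \<and> ein V E \<and> is_2DD V E (SAs V sta)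
   \<and> (\<forall>D. is_2DD V E D \<longrightarrow> card (SAs V sta) \<le> card D)
   \<and> (\<forall>D. is_2DD V E D \<longrightarrow> card D = card (SAs V sta) \<longrightarrow> D = SAs V sta)
   \<and> (\<forall>x\<in>V. sta x = SA \<longrightarrow> (\<exists>w\<in>V. adj E x w \<and> sta w \<noteq> SA
         \<and> (\<forall>z. adj E w z \<longrightarrow> sta z = SA \<longrightarrow> z = x)
         \<and> (\<forall>y z. adj E w y \<longrightarrow> adj E y z \<longrightarrow> sta z = SA \<longrightarrow> z = x)))
   \<and> (\<forall>c\<in>V. sta c = SC \<longrightarrow> (\<exists>a. adj E c a \<and> sta a = SA))
   \<and> (\<forall>x\<in>V. sta x = SA \<longrightarrow> 2 \<le> deg E x)
   \<and> card V + 3 = 4 * card (SAs V sta) + card (leaves V E)"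

lemma card_le1: "A \<subseteq> {z} \<Longrightarrow> card A \<le> 1"
  using card_mono[of "{z}" A] by auto

lemma base_inv:
  assumes dist: "distinct [a,b,c]" and st: "sta a = SC" "sta b = SA" "sta c = SC"
  shows "Inv {a,b,c} {{a,b},{b,c}} sta"
proof -
  define V where "V = {a,b,c}"
  define E where "E = {{a,b},{b,c}}"
  have adjE: "adj E x y \<longleftrightarrow> (x=a\<and>y=b)\<or>(x=b\<and>y=a)\<or>(x=b\<and>y=c)\<or>(x=c\<and>y=b)" for x y
    unfolding E_def adj_def by (auto simp: doubleton_eq_iff)
  have d: "a \<noteq> b" "a \<noteq> c" "b \<noteq> c" using dist by auto
  have SA: "SAs V sta = {b}" unfolding SAs_def V_def using st d by auto
  have fin: "finite V" unfolding V_def by auto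
  have ein: "ein V E" unfolding ein_def adjE V_def using d by auto
  have dd: "is_2DD V E {b}" unfolding is_2DD_dom domd_def V_def using adjE d by auto
  have lb: "1 \<le> card D" if D: "is_2DD V E D" for D
  proof -
    have "D \<noteq> {}"
    proof
      assume "D = {}"
      then have "domd V E {} a" using D unfolding is_2DD_dom V_def by auto
      then show False unfolding domd_def by auto
    qed
    moreover have "finite D" using D fin unfolding is_2DD_def using finite_subset by blast
    ultimately show ?thesis by (simp add: Suc_leI card_gt_0_iff)
  qed
  have uq: "D = {b}" if D: "is_2DD V E D" "card D = 1" for D
  proof -
    obtain z where z: "D = {z}" using D(2) card_1_singletonE by blast
    have zV: "z \<in> V" using D(1) z unfolding is_2DD_def by auto
    show ?thesis
    proof (rule ccontr)
      assume "D \<noteq> {b}"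
      then have zb: "z \<noteq> b" using z by auto
      obtain t where t: "t \<in> V" "t \<noteq> z" "\<not> adj E t z"
        using zV zb d unfolding V_def adjE by auto
      then have "domd V E {z} t" using D(1) z unfolding is_2DD_dom by auto
      moreover have "card {w \<in> {z}. dist2 V E t w} \<le> 1" by (rule card_le1[of _ z]) auto
      ultimately show False using t unfolding domd_def by auto
    qed
  qed
  have nb: "nbhd E a = {b}" "nbhd E b = {a,c}" "nbhd E c = {b}"
    unfolding nbhd_def adjE using d by auto
  have lv: "leaves V E = {a,c}" unfolding leaves_def deg_def V_def using nb d by auto
  have "Inv V E sta"
    unfolding Inv_def SA
    apply (intro conjI)
    subgoal by (rule fin)
    subgoal by (rule ein)
    subgoal by (rule dd)
    subgoal using lb by simp
    subgoal using uq by simp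
    subgoal unfolding V_def using st d adjE by auto
    subgoal unfolding V_def using st d adjE by auto
    subgoal unfolding V_def deg_def using st d nb by auto
    subgoal unfolding lv unfolding V_def using d by simp
    done
  then show ?thesis unfolding V_def E_def .
qed


lemma InvD: assumes "Inv V E sta"
  shows "finite V" "ein V E" "is_2DD V E (SAs V sta)"
   "\<And>D. is_2DD V E D \<Longrightarrow> card (SAs V sta) \<le> card D"
   "\<And>D. is_2DD V E D \<Longrightarrow> card D = card (SAs V sta) \<Longrightarrow> D = SAs V sta"
   "\<And>x. x\<in>V \<Longrightarrow> sta x = SA \<Longrightarrow> (\<exists>w\<in>V. adj E x w \<and> sta w \<noteq> SA
         \<and> (\<forall>z. adj E w z \<longrightarrow> sta z = SA \<longrightarrow> z = x)
         \<and> (\<forall>y z. adj E w y \<longrightarrow> adj E y z \<longrightarrow> sta z = SA \<longrightarrow> z = x))"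
   "\<And>c. c\<in>V \<Longrightarrow> sta c = SC \<Longrightarrow> (\<exists>a. adj E c a \<and> sta a = SA)"
   "\<And>x. x\<in>V \<Longrightarrow> sta x = SA \<Longrightarrow> 2 \<le> deg E x"
   "card V + 3 = 4 * card (SAs V sta) + card (leaves V E)"
  using assms unfolding Inv_def by blast+

lemma nbhd_insert: "nbhd (insert {a,b} E) x = nbhd E x \<union> {y. (x = a \<and> y = b) \<or> (x = b \<and> y = a)}"
  by (auto simp: nbhd_def adj_insert)

lemma nbhd_sub: "ein V E \<Longrightarrow> nbhd E x \<subseteq> V"
  unfolding nbhd_def using einD by fastforce

lemma card_swap: assumes "finite D" "u \<in> D"
  shows "card (insert v (D - {u})) \<le> card D"
    and "v \<in> D \<Longrightarrow> v \<noteq> u \<Longrightarrow> card (insert v (D - {u})) < card D"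
    and "v \<notin> D \<Longrightarrow> card (insert v (D - {u})) = card D"
proof -
  have c: "card (D - {u}) = card D - 1" "card D \<ge> 1"
    using assms by (auto simp: card_Diff_singleton Suc_le_eq card_gt_0_iff)
  show "card (insert v (D - {u})) \<le> card D" using c assms by (simp add: card_insert_if)
  show "v \<in> D \<Longrightarrow> v \<noteq> u \<Longrightarrow> card (insert v (D - {u})) < card D"
    using c assms by (simp add: card_insert_if)
  show "v \<notin> D \<Longrightarrow> card (insert v (D - {u})) = card D"
    using c assms by (simp add: card_insert_if)
qed

lemma op1_inv:
  assumes I: "Inv V E sta" and v: "v \<in> V" "sta v = SA" and u: "u \<notin> V"
   and st: "\<forall>x\<in>V. sta' x = sta x" "sta' u = SC"
  shows "Inv (insert u V) (insert {u,v} E) sta'"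
proof -
  define V' where "V' = insert u V"
  define E' where "E' = insert {u,v} E"
  define S where "S = SAs V sta"
  note fin = InvD(1)[OF I] and ein = InvD(2)[OF I] and dd = InvD(3)[OF I]
    and lb = InvD(4)[OF I] and uq = InvD(5)[OF I] and iA = InvD(6)[OF I]
    and iC = InvD(7)[OF I] and dA = InvD(8)[OF I] and cnt = InvD(9)[OF I]
  have adjE': "adj E' x y \<longleftrightarrow> adj E x y \<or> (x=u \<and> y=v) \<or> (x=v \<and> y=u)" for x y
    unfolding E'_def by (simp add: adj_insert)
  have inV: "adj E a b \<Longrightarrow> a \<in> V \<and> b \<in> V \<and> a \<noteq> b" for a b using einD[OF ein] by blast
  have uv: "u \<noteq> v" using u v by auto
  have fin': "finite V'" unfolding V'_def using fin by auto
  have SA': "SAs V' sta' = S" unfolding S_def SAs_def V'_def using st by auto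
  have SV: "S \<subseteq> V" unfolding S_def SAs_def by auto
  have ein': "ein V' E'" unfolding ein_def V'_def adjE' using inV uv v u by auto
  have dd': "is_2DD V' E' S"
    unfolding is_2DD_dom
  proof (intro conjI ballI)
    show "S \<subseteq> V'" using SV unfolding V'_def by auto
    fix x assume x: "x \<in> V' - S"
    show "domd V' E' S x"
    proof (cases "x = u")
      case True
      have "v \<in> S" unfolding S_def SAs_def using v by auto
      then show ?thesis using True adjE' unfolding domd_def by auto
    next
      case False
      then have xV: "x \<in> V" "x \<notin> S" using x unfolding V'_def by auto
      have "domd V E S x" using dd xV unfolding is_2DD_dom S_def by auto
      then show ?thesis
        by (rule dom_mono) (use SV fin u xV in \<open>auto simp: V'_def adjE' finite_subset\<close>)
    qed
  qed
  have red: "is_2DD V E (if u \<in> D' then insert v (D' - {u}) else D')"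
    if D': "is_2DD V' E' D'" for D'
    using L1[OF ein fin v(1) u D'[unfolded V'_def E'_def]] .
  have finD': "finite D'" if D': "is_2DD V' E' D'" for D'
    using D' fin' finite_subset unfolding is_2DD_def by blast
  have lb': "card S \<le> card D'" if D': "is_2DD V' E' D'" for D'
  proof (cases "u \<in> D'")
    case True
    then have "card S \<le> card (insert v (D' - {u}))" using lb[OF red[OF D']] unfolding S_def by simp
    also have "\<dots> \<le> card D'" using card_swap(1)[OF finD'[OF D'] True] .
    finally show ?thesis .
  next
    case False
    then show ?thesis using lb[OF red[OF D']] unfolding S_def by simp
  qed
  have uq': "D' = S" if D': "is_2DD V' E' D'" "card D' = card S" for D'
  proof (cases "u \<in> D'")
    case False
    then show ?thesis using uq[OF red[OF D'(1)]] D'(2) unfolding S_def by simp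
  next
    case True
    define D where "D = insert v (D' - {u})"
    have Dd: "is_2DD V E D" using red[OF D'(1)] True unfolding D_def by simp
    have vD': "v \<notin> D'"
    proof
      assume "v \<in> D'"
      then have "card D < card D'" using card_swap(2)[OF finD'[OF D'(1)] True] uv unfolding D_def by auto
      then show False using lb[OF Dd] D'(2) unfolding S_def by simp
    qed
    have "card D = card D'" using card_swap(3)[OF finD'[OF D'(1)] True vD'] unfolding D_def .
    then have DS: "D = S" using uq[OF Dd] D'(2) unfolding S_def by simp
    have D'eq: "D' = insert u (S - {v})" using DS True vD' unfolding D_def by auto
    obtain w where w: "w \<in> V" "adj E v w" "sta w \<noteq> SA"
        "\<And>z. adj E w z \<Longrightarrow> sta z = SA \<Longrightarrow> z = v"
        "\<And>y z. adj E w y \<Longrightarrow> adj E y z \<Longrightarrow> sta z = SA \<Longrightarrow> z = v"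
      using iA[OF v] by blast
    have wv: "w \<noteq> v" using w v by auto
    have wu: "w \<noteq> u" using w u by auto
    have wD': "w \<in> V' - D'" using w wu unfolding D'eq V'_def S_def SAs_def by auto
    have "domd V' E' D' w" using D'(1) wD' unfolding is_2DD_dom by auto
    moreover have "\<not> adj E' w y" if "y \<in> D'" for y
    proof
      assume a: "adj E' w y"
      show False
      proof (cases "y = u")
        case True then show False using a adjE'[of w u] inV[of w u] wv u by auto
      next
        case False
        then have "y \<in> S" "y \<noteq> v" using that unfolding D'eq by auto
        moreover have "adj E w y" using a adjE' False wu by auto
        ultimately show False using w(4) unfolding S_def SAs_def by auto
      qed
    qed
    moreover have "card {z \<in> D'. dist2 V' E' w z} \<le> 1"
    proof (rule card_le1[of _ u], rule)
      fix z assume z: "z \<in> {z \<in> D'. dist2 V' E' w z}"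
      show "z \<in> {u}"
      proof (rule ccontr)
        assume zu: "z \<notin> {u}"
        then have zS: "z \<in> S" "z \<noteq> v" using z unfolding D'eq by auto
        obtain x where x: "adj E' w x" "adj E' x z" using z unfolding dist2_def by auto
        have xu: "x \<noteq> u"
        proof
          assume "x = u" then show False using x(1) adjE'[of w u] inV[of w u] wv u by auto
        qed
        have "adj E w x" using x(1) adjE' xu wu by auto
        moreover have "adj E x z" using x(2) adjE' xu zu by auto
        ultimately show False using w(5) zS unfolding S_def SAs_def by auto
      qed
    qed
    ultimately show ?thesis unfolding domd_def by auto
  qed
  have iA': "\<exists>w\<in>V'. adj E' x w \<and> sta' w \<noteq> SA
         \<and> (\<forall>z. adj E' w z \<longrightarrow> sta' z = SA \<longrightarrow> z = x)
         \<and> (\<forall>y z. adj E' w y \<longrightarrow> adj E' y z \<longrightarrow> sta' z = SA \<longrightarrow> z = x)"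
    if x: "x \<in> V'" "sta' x = SA" for x
  proof -
    have xV: "x \<in> V" "sta x = SA" using x st unfolding V'_def by auto
    obtain w where w: "w \<in> V" "adj E x w" "sta w \<noteq> SA"
        "\<And>z. adj E w z \<Longrightarrow> sta z = SA \<Longrightarrow> z = x"
        "\<And>y z. adj E w y \<Longrightarrow> adj E y z \<Longrightarrow> sta z = SA \<Longrightarrow> z = x"
      using iA[OF xV] by blast
    have wv: "w \<noteq> v" using w v by auto
    have wu: "w \<noteq> u" using w u by auto
    have A1: "adj E w z" if "adj E' w z" for z using that adjE' wv wu by auto
    show ?thesis
    proof (intro bexI conjI allI impI)
      show "w \<in> V'" using w unfolding V'_def by auto
      show "adj E' x w" using w adjE' by auto
      show "sta' w \<noteq> SA" using w st by auto
      fix z assume "adj E' w z" "sta' z = SA"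
      then show "z = x" using A1 w(4) inV st by (metis (no_types))
    next
      fix y z assume a: "adj E' w y" "adj E' y z" "sta' z = SA"
      have y: "adj E w y" using A1 a(1) .
      have "y \<noteq> u" using inV[OF y] u by auto
      then have "adj E y z \<or> z = u" using a(2) adjE' by auto
      then have "adj E y z" using a(3) st by auto
      then show "z = x" using w(5)[OF y] inV st a(3) by (metis (no_types))
    qed
  qed
  have iC': "\<exists>a. adj E' c a \<and> sta' a = SA" if c: "c \<in> V'" "sta' c = SC" for c
  proof (cases "c = u")
    case True then show ?thesis using adjE' v st by auto
  next
    case False
    then have "c \<in> V" "sta c = SC" using c st unfolding V'_def by auto
    then obtain a where a: "adj E c a" "sta a = SA" using iC by blast
    then have "adj E' c a" "sta' a = SA" using adjE'[of c a] inV[OF a(1)] st by auto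
    then show ?thesis by blast
  qed
  have nbV: "nbhd E x \<subseteq> V" for x using nbhd_sub[OF ein] .
  have finnb: "finite (nbhd E x)" for x using nbV fin finite_subset by blast
  have nb': "nbhd E' x = nbhd E x \<union> {y. (x = u \<and> y = v) \<or> (x = v \<and> y = u)}" for x
    unfolding E'_def by (rule nbhd_insert)
  have nbu0: "nbhd E u = {}" using inV u unfolding nbhd_def by auto
  have nbu: "nbhd E' u = {v}" using nb'[of u] nbu0 uv by auto
  have nbv: "nbhd E' v = insert u (nbhd E v)" using nb' uv by auto
  have nbo: "nbhd E' x = nbhd E x" if "x \<noteq> u" "x \<noteq> v" for x using nb' that by auto
  have unb: "u \<notin> nbhd E v" using nbV[of v] u by auto
  have degv: "deg E' v = Suc (deg E v)" unfolding deg_def nbv using unb finnb[of v] by simp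
  have dA': "2 \<le> deg E' x" if x: "x \<in> V'" "sta' x = SA" for x
  proof -
    have xV: "x \<in> V" "sta x = SA" using x st unfolding V'_def by auto
    have "deg E x \<le> deg E' x" unfolding deg_def
      by (rule card_mono) (use finnb nb' in auto)
    then show ?thesis using dA[OF xV] by auto
  qed
  have lv: "leaves V' E' = insert u (leaves V E)"
  proof -
    have "deg E v \<noteq> 1" using dA[OF v] by auto
    moreover have "deg E' v \<noteq> 1" using degv dA[OF v] by auto
    moreover have "deg E' u = 1" unfolding deg_def nbu by simp
    ultimately show ?thesis
    proof (intro set_eqI)
      fix x
      assume h: "deg E v \<noteq> 1" "deg E' v \<noteq> 1" "deg E' u = 1"
      show "x \<in> leaves V' E' \<longleftrightarrow> x \<in> insert u (leaves V E)"
      proof (cases "x = u")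
        case True then show ?thesis using h unfolding leaves_def V'_def by auto
      next
        case F: False
        show ?thesis
        proof (cases "x = v")
          case True then show ?thesis using h F v unfolding leaves_def V'_def by auto
        next
          case False
          then have "deg E' x = deg E x" using nbo F unfolding deg_def by simp
          then show ?thesis using F unfolding leaves_def V'_def by auto
        qed
      qed
    qed
  qed
  have cnt': "card V' + 3 = 4 * card S + card (leaves V' E')"
  proof -
    have "finite (leaves V E)" using fin unfolding leaves_def by auto
    moreover have "u \<notin> leaves V E" using u unfolding leaves_def by auto
    ultimately have "card (leaves V' E') = Suc (card (leaves V E))" unfolding lv by simp
    moreover have "card V' = Suc (card V)" unfolding V'_def using fin u by simp
    ultimately show ?thesis using cnt unfolding S_def by simp
  qed
  have "Inv V' E' sta'"
    unfolding Inv_def SA'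
    apply (intro conjI)
    subgoal by (rule fin')
    subgoal by (rule ein')
    subgoal by (rule dd')
    subgoal using lb' by blast
    subgoal using uq' by blast
    subgoal using iA' by blast
    subgoal using iC' by blast
    subgoal using dA' by blast
    subgoal by (rule cnt')
    done
  then show ?thesis unfolding V'_def E'_def .
qed


lemma card3:
  assumes "finite D'" "D' \<subseteq> V \<union> {u1,u2,u3,u4}" "u1\<notin>V" "u2\<notin>V" "u3\<notin>V" "u4\<notin>V"
    "distinct [u1,u2,u3,u4]"
  shows "card D' = card (D' \<inter> V) + card (D' \<inter> {u1,u2}) + card (D' \<inter> {u3,u4})"
proof -
  have eq: "D' = (D' \<inter> V) \<union> (D' \<inter> {u1,u2}) \<union> (D' \<inter> {u3,u4})" using assms(2) by auto
  have "card ((D' \<inter> V) \<union> (D' \<inter> {u1,u2}) \<union> (D' \<inter> {u3,u4}))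
      = card ((D' \<inter> V) \<union> (D' \<inter> {u1,u2})) + card (D' \<inter> {u3,u4})"
    by (rule card_Un_disjoint) (use assms in auto)
  also have "card ((D' \<inter> V) \<union> (D' \<inter> {u1,u2})) = card (D' \<inter> V) + card (D' \<inter> {u1,u2})"
    by (rule card_Un_disjoint) (use assms in auto)
  finally show ?thesis using eq by simp
qed

lemma op3_inv:
  assumes I: "Inv V E sta" and v: "v \<in> V" "sta v = SC" "deg E v = 1"
    and dist: "distinct [u1,u2,u3,u4]" and n: "u1\<notin>V" "u2\<notin>V" "u3\<notin>V" "u4\<notin>V"
    and st: "\<forall>x\<in>V. sta' x = sta x" "sta' u1 = SD" "sta' u2 = SB" "sta' u3 = SA" "sta' u4 = SC"
  shows "Inv (V \<union> {u1,u2,u3,u4}) (E \<union> {{u1,v},{u1,u2},{u2,u3},{u3,u4}}) sta'"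
proof -
  define V' where "V' = V \<union> {u1,u2,u3,u4}"
  define E' where "E' = E \<union> {{u1,v},{u1,u2},{u2,u3},{u3,u4}}"
  define S where "S = SAs V sta"
  note fin = InvD(1)[OF I] and ein = InvD(2)[OF I] and dd = InvD(3)[OF I]
    and lb = InvD(4)[OF I] and uq = InvD(5)[OF I] and iA = InvD(6)[OF I]
    and iC = InvD(7)[OF I] and dA = InvD(8)[OF I] and cnt = InvD(9)[OF I]
  have E'eq: "E' = insert {u1,v} (insert {u1,u2} (insert {u2,u3} (insert {u3,u4} E)))"
    unfolding E'_def by auto
  have adjE': "adj E' x y \<longleftrightarrow> adj E x y \<or> (x=u1\<and>y=v)\<or>(x=v\<and>y=u1)\<or>(x=u1\<and>y=u2)\<or>(x=u2\<and>y=u1)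
     \<or>(x=u2\<and>y=u3)\<or>(x=u3\<and>y=u2)\<or>(x=u3\<and>y=u4)\<or>(x=u4\<and>y=u3)" for x y
    unfolding E'eq by (simp add: adj_insert) blast
  have inV: "adj E a b \<Longrightarrow> a \<in> V \<and> b \<in> V \<and> a \<noteq> b" for a b using einD[OF ein] by blast
  have d: "u1 \<noteq> u2" "u1 \<noteq> u3" "u1 \<noteq> u4" "u2 \<noteq> u3" "u2 \<noteq> u4" "u3 \<noteq> u4" using dist by auto
  have nv: "v \<noteq> u1" "v \<noteq> u2" "v \<noteq> u3" "v \<noteq> u4" using v n by auto
  have fin': "finite V'" unfolding V'_def using fin by auto
  have SV: "S \<subseteq> V" unfolding S_def SAs_def by auto
  have SA': "SAs V' sta' = insert u3 S" unfolding S_def SAs_def V'_def using st by auto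
  have vS: "v \<notin> S" using v unfolding S_def SAs_def by auto
  have ein': "ein V' E'" unfolding ein_def V'_def adjE' using inV d nv v by auto
  have noadjn: "\<not> adj E' x y" if "x \<in> V" "y \<in> {u2,u3,u4}" for x y
    using that adjE'[of x y] inV[of x y] n d nv by auto
  have dd': "is_2DD V' E' (insert u3 S)"
    unfolding is_2DD_dom
  proof (intro conjI ballI)
    show "insert u3 S \<subseteq> V'" using SV unfolding V'_def by auto
    fix x assume x: "x \<in> V' - insert u3 S"
    consider "x \<in> V" | "x = u1" | "x = u2" | "x = u4" using x unfolding V'_def by auto
    then show "domd V' E' (insert u3 S) x"
    proof cases
      case 1
      then have xS: "x \<notin> S" using x by auto
      have "domd V E S x" using dd 1 xS unfolding is_2DD_dom S_def by auto
      then show ?thesis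
      proof (rule dom_mono)
        show "V \<subseteq> V'" unfolding V'_def by auto
        show "adj E a b \<Longrightarrow> adj E' a b" for a b using adjE' by auto
        show "adj E x b" if "b \<in> S" "adj E' x b" for b
          using that SV 1 adjE'[of x b] n d nv by auto
        show "S \<subseteq> insert u3 S" by auto
        show "finite (insert u3 S)" using SV fin finite_subset by auto
      qed
    next
      case 2
      obtain a where a: "adj E v a" "sta a = SA" using iC v by blast
      have aV: "a \<in> V" using inV[OF a(1)] by auto
      have aS: "a \<in> S" using aV a unfolding S_def SAs_def by auto
      have "dist2 V' E' u1 a" unfolding dist2_def
      proof (intro conjI bexI)
        show "u1 \<noteq> a" using aV n by auto
        show "\<not> adj E' u1 a" using adjE'[of u1 a] inV[of u1 a] aV n a v d nv by auto
        show "adj E' u1 v" "adj E' v a" using adjE' a by auto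
        show "v \<in> V'" using v unfolding V'_def by auto
      qed
      moreover have "dist2 V' E' u1 u3" unfolding dist2_def
      proof (intro conjI bexI)
        show "u1 \<noteq> u3" using d by auto
        show "\<not> adj E' u1 u3" using adjE'[of u1 u3] inV[of u1 u3] n d nv by auto
        show "adj E' u1 u2" "adj E' u2 u3" using adjE' by auto
        show "u2 \<in> V'" unfolding V'_def by auto
      qed
      ultimately have sub: "{a, u3} \<subseteq> {w \<in> insert u3 S. dist2 V' E' u1 w}" using aS by auto
      have fi: "finite {w \<in> insert u3 S. dist2 V' E' u1 w}"
      proof -
        have "finite (insert u3 S)" using SV fin finite_subset by auto
        then show ?thesis by (rule finite_subset[rotated]) auto
      qed
      have "card {a, u3} \<le> card {w \<in> insert u3 S. dist2 V' E' u1 w}"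
        using card_mono[OF fi sub] .
      moreover have "a \<noteq> u3" using aV n by auto
      then have "card {a, u3} = 2" by simp
      ultimately show ?thesis using 2 unfolding domd_def by auto
    next
      case 3 then show ?thesis unfolding domd_def using adjE' by auto
    next
      case 4 then show ?thesis unfolding domd_def using adjE' by auto
    qed
  qed
  have finD': "finite D'" if D': "is_2DD V' E' D'" for D'
    using D' fin' finite_subset unfolding is_2DD_def by blast
  have red: "is_2DD V E ((D' \<inter> V) \<union> (if u1 \<in> D' \<or> u2 \<in> D' then {v} else {}))"
    and u34: "u3 \<in> D' \<or> u4 \<in> D'"
    if D': "is_2DD V' E' D'" for D'
    using L3[OF ein fin v(1) dist n D'[unfolded V'_def E'_def]] by blast+
  have cards: "card D' = card (D' \<inter> V) + card (D' \<inter> {u1,u2}) + card (D' \<inter> {u3,u4})"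
    and c12: "(if u1 \<in> D' \<or> u2 \<in> D' then 1 else 0) \<le> card (D' \<inter> {u1,u2})"
    and c34: "1 \<le> card (D' \<inter> {u3,u4})"
    and cD: "card ((D' \<inter> V) \<union> (if u1 \<in> D' \<or> u2 \<in> D' then {v} else {}))
               \<le> card (D' \<inter> V) + (if u1 \<in> D' \<or> u2 \<in> D' then 1 else 0)"
    if D': "is_2DD V' E' D'" for D'
  proof -
    show "card D' = card (D' \<inter> V) + card (D' \<inter> {u1,u2}) + card (D' \<inter> {u3,u4})"
      by (rule card3) (use finD'[OF D'] D' n dist in \<open>auto simp: is_2DD_def V'_def\<close>)
    show "(if u1 \<in> D' \<or> u2 \<in> D' then 1 else 0) \<le> card (D' \<inter> {u1,u2})"
      by (auto simp: Suc_le_eq card_gt_0_iff)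
    show "1 \<le> card (D' \<inter> {u3,u4})" using u34[OF D'] by (auto simp: Suc_le_eq card_gt_0_iff)
    show "card ((D' \<inter> V) \<union> (if u1 \<in> D' \<or> u2 \<in> D' then {v} else {}))
               \<le> card (D' \<inter> V) + (if u1 \<in> D' \<or> u2 \<in> D' then 1 else 0)"
      using card_Un_le[of "D' \<inter> V" "{v}"] by auto
  qed
  have finS: "finite S" using SV fin finite_subset by blast
  have u3S: "u3 \<notin> S" using SV n by auto
  have cS': "card (insert u3 S) = Suc (card S)" using finS u3S by simp
  have lb': "card (insert u3 S) \<le> card D'" if D': "is_2DD V' E' D'" for D'
    using lb[OF red[OF D']] cards[OF D'] c12[OF D'] c34[OF D'] cD[OF D'] cS' unfolding S_def
    by linarith
  have uq': "D' = insert u3 S" if D': "is_2DD V' E' D'" "card D' = card (insert u3 S)" for D'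
  proof -
    define D where "D = (D' \<inter> V) \<union> (if u1 \<in> D' \<or> u2 \<in> D' then {v} else {})"
    have Dd: "is_2DD V E D" using red[OF D'(1)] unfolding D_def .
    have "card D = card S" using lb[OF Dd] cards[OF D'(1)] c12[OF D'(1)] c34[OF D'(1)] cD[OF D'(1)]
      cS' D'(2) unfolding S_def D_def by linarith
    then have DS: "D = S" using uq[OF Dd] unfolding S_def by simp
    have n12: "\<not> (u1 \<in> D' \<or> u2 \<in> D')" using DS vS unfolding D_def by auto
    then have D'V: "D' \<inter> V = S" using DS unfolding D_def by auto
    have q1: "card (D' \<inter> {u3,u4}) = 1" using cards[OF D'(1)] c34[OF D'(1)] D'(2) cS' D'V n12 by simp
    have u3D: "u3 \<in> D'"
    proof (rule ccontr)
      assume u3: "u3 \<notin> D'"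
      have u2V: "u2 \<in> V' - D'" using n12 unfolding V'_def by auto
      have "domd V' E' D' u2" using D'(1) u2V unfolding is_2DD_dom by auto
      moreover have "\<not> adj E' u2 y" if "y \<in> D'" for y
        using that n12 u3 adjE'[of u2 y] inV[of u2 y] n d nv by auto
      moreover have "card {z \<in> D'. dist2 V' E' u2 z} \<le> 1"
      proof (rule card_le1[of _ u4], rule)
        fix z assume z: "z \<in> {z \<in> D'. dist2 V' E' u2 z}"
        then obtain x where x: "adj E' u2 x" "adj E' x z" "z \<noteq> u2" unfolding dist2_def by auto
        have "x = u1 \<or> x = u3" using x(1) adjE'[of u2 x] inV[of u2 x] n d nv by auto
        then have "z = v \<or> z = u4" using x(2,3) adjE'[of x z] inV[of x z] n d nv by auto
        moreover have "v \<notin> D'" using D'V vS v by auto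
        ultimately show "z \<in> {u4}" using z by auto
      qed
      ultimately show False unfolding domd_def by auto
    qed
    have u4D: "u4 \<notin> D'"
    proof
      assume "u4 \<in> D'"
      then have "D' \<inter> {u3,u4} = {u3,u4}" using u3D by auto
      then show False using q1 d by auto
    qed
    have "D' \<subseteq> V'" using D'(1) unfolding is_2DD_def by auto
    then show ?thesis using D'V n12 u3D u4D unfolding V'_def by auto
  qed
  have iA': "\<exists>w\<in>V'. adj E' x w \<and> sta' w \<noteq> SA
         \<and> (\<forall>z. adj E' w z \<longrightarrow> sta' z = SA \<longrightarrow> z = x)
         \<and> (\<forall>y z. adj E' w y \<longrightarrow> adj E' y z \<longrightarrow> sta' z = SA \<longrightarrow> z = x)"
    if x: "x \<in> V'" "sta' x = SA" for x
  proof (cases "x = u3")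
    case True
    show ?thesis
    proof (intro bexI conjI allI impI)
      show "u4 \<in> V'" unfolding V'_def by auto
      show "adj E' x u4" using True adjE' by auto
      show "sta' u4 \<noteq> SA" using st by auto
      fix z assume "adj E' u4 z" "sta' z = SA"
      then show "z = x" using True adjE'[of u4 z] inV[of u4 z] n d nv by auto
    next
      fix y z assume a: "adj E' u4 y" "adj E' y z" "sta' z = SA"
      have "y = u3" using a(1) adjE'[of u4 y] inV[of u4 y] n d nv by auto
      then have "z = u2 \<or> z = u4" using a(2) adjE'[of y z] inV[of y z] n d nv by auto
      then show "z = x" using a(3) st by auto
    qed
  next
    case False
    have xV: "x \<in> V" "sta x = SA" using x st False unfolding V'_def by auto
    obtain w where w: "w \<in> V" "adj E x w" "sta w \<noteq> SA"
        "\<And>z. adj E w z \<Longrightarrow> sta z = SA \<Longrightarrow> z = x"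
        "\<And>y z. adj E w y \<Longrightarrow> adj E y z \<Longrightarrow> sta z = SA \<Longrightarrow> z = x"
      using iA[OF xV] by blast
    have wn: "w \<noteq> u1" "w \<noteq> u2" "w \<noteq> u3" "w \<noteq> u4" using w n by auto
    have A1: "adj E w z \<or> (w = v \<and> z = u1)" if "adj E' w z" for z
      using that adjE'[of w z] wn d nv by auto
    show ?thesis
    proof (intro bexI conjI allI impI)
      show "w \<in> V'" using w unfolding V'_def by auto
      show "adj E' x w" using w adjE' by auto
      show "sta' w \<noteq> SA" using w st by auto
      fix z assume a: "adj E' w z" "sta' z = SA"
      show "z = x"
      proof (cases "adj E w z")
        case True then show ?thesis using w(4) inV[OF True] st a(2) by auto
      next
        case False then show ?thesis using A1[OF a(1)] a(2) st by auto
      qed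
    next
      fix y z assume a: "adj E' w y" "adj E' y z" "sta' z = SA"
      show "z = x"
      proof (cases "adj E w y")
        case True
        have yn: "y \<noteq> u1" "y \<noteq> u2" "y \<noteq> u3" "y \<noteq> u4" using inV[OF True] n by auto
        have "adj E y z \<or> (y = v \<and> z = u1)" using a(2) adjE'[of y z] yn d nv by auto
        then have yz: "adj E y z" using a(3) st by auto
        then have "z \<in> V" using inV by blast
        then have "sta z = SA" using st a(3) by auto
        then show ?thesis using w(5)[OF True yz] by blast
      next
        case False
        then have "y = u1" using A1[OF a(1)] by auto
        then have "z = v \<or> z = u2" using a(2) adjE'[of y z] inV[of y z] n d nv by auto
        then show ?thesis using a(3) st v by auto
      qed
    qed
  qed
  have iC': "\<exists>a. adj E' c a \<and> sta' a = SA" if c: "c \<in> V'" "sta' c = SC" for c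
  proof (cases "c \<in> V")
    case True
    then have "sta c = SC" using c st by auto
    then obtain a where a: "adj E c a" "sta a = SA" using iC True by blast
    then have "adj E' c a" "sta' a = SA" using adjE'[of c a] inV[OF a(1)] st d nv by auto
    then show ?thesis by blast
  next
    case False
    then have "c = u4" using c st unfolding V'_def by auto
    then show ?thesis using adjE' st by auto
  qed
  have nbV: "nbhd E x \<subseteq> V" for x using nbhd_sub[OF ein] .
  have finnb: "finite (nbhd E x)" for x using nbV fin finite_subset by blast
  have nbo: "nbhd E' x = nbhd E x" if "x \<in> V" "x \<noteq> v" for x
  proof (rule set_eqI)
    fix y show "y \<in> nbhd E' x \<longleftrightarrow> y \<in> nbhd E x"
      unfolding nbhd_def mem_Collect_eq adjE' using that n by auto
  qed
  have nbv: "nbhd E' v = insert u1 (nbhd E v)"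
  proof (rule set_eqI)
    fix y show "y \<in> nbhd E' v \<longleftrightarrow> y \<in> insert u1 (nbhd E v)"
      unfolding nbhd_def mem_Collect_eq adjE' insert_iff using nv by auto
  qed
  have nb1: "nbhd E' u1 = {v,u2}"
  proof (rule set_eqI)
    fix y show "y \<in> nbhd E' u1 \<longleftrightarrow> y \<in> {v,u2}"
      unfolding nbhd_def mem_Collect_eq adjE' using inV[of u1 y] n d nv by auto
  qed
  have nb2: "nbhd E' u2 = {u1,u3}"
  proof (rule set_eqI)
    fix y show "y \<in> nbhd E' u2 \<longleftrightarrow> y \<in> {u1,u3}"
      unfolding nbhd_def mem_Collect_eq adjE' using inV[of u2 y] n d nv by auto
  qed
  have nb3: "nbhd E' u3 = {u2,u4}"
  proof (rule set_eqI)
    fix y show "y \<in> nbhd E' u3 \<longleftrightarrow> y \<in> {u2,u4}"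
      unfolding nbhd_def mem_Collect_eq adjE' using inV[of u3 y] n d nv by auto
  qed
  have nb4: "nbhd E' u4 = {u3}"
  proof (rule set_eqI)
    fix y show "y \<in> nbhd E' u4 \<longleftrightarrow> y \<in> {u3}"
      unfolding nbhd_def mem_Collect_eq adjE' using inV[of u4 y] n d nv by auto
  qed
  have unb: "u1 \<notin> nbhd E v" using nbV[of v] n by auto
  have degv: "deg E' v = 2" unfolding deg_def nbv using unb finnb[of v] v(3)
    unfolding deg_def by simp
  have dA': "2 \<le> deg E' x" if x: "x \<in> V'" "sta' x = SA" for x
  proof (cases "x = u3")
    case True then show ?thesis using d by (simp add: deg_def nb3)
  next
    case False
    have xV: "x \<in> V" "sta x = SA" using x st False unfolding V'_def by auto
    have "deg E x \<le> deg E' x" unfolding deg_def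
    proof (rule card_mono)
      show "finite (nbhd E' x)" "nbhd E x \<subseteq> nbhd E' x"
        using finnb[of x] finnb[of v] nbv nbo[OF xV(1)] by (cases "x = v"; simp; blast)+
    qed
    then show ?thesis using dA[OF xV] by auto
  qed
  have lv: "leaves V' E' = insert u4 (leaves V E - {v})"
  proof (intro set_eqI)
    fix x
    show "x \<in> leaves V' E' \<longleftrightarrow> x \<in> insert u4 (leaves V E - {v})"
    proof (cases "x \<in> V")
      case True
      show ?thesis
      proof (cases "x = v")
        case True then show ?thesis using degv nv unfolding leaves_def by auto
      next
        case False
        then have "deg E' x = deg E x" using nbo \<open>x \<in> V\<close> unfolding deg_def by simp
        then show ?thesis using False \<open>x \<in> V\<close> n unfolding leaves_def V'_def by auto
      qed
    next
      case False
      then have "x \<notin> leaves V E" unfolding leaves_def by auto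
      moreover have "x \<in> leaves V' E' \<longleftrightarrow> x = u4"
      proof (cases "x \<in> {u1,u2,u3,u4}")
        case True
        then consider "x = u1" | "x = u2" | "x = u3" | "x = u4" by blast
        then show ?thesis
        proof cases
          case 1 then show ?thesis using d nv by (simp add: leaves_def V'_def deg_def nb1)
        next
          case 2 then show ?thesis using d by (simp add: leaves_def V'_def deg_def nb2)
        next
          case 3 then show ?thesis using d by (simp add: leaves_def V'_def deg_def nb3)
        next
          case 4 then show ?thesis using d by (simp add: leaves_def V'_def deg_def nb4)
        qed
      next
        case F: False
        then show ?thesis using False unfolding leaves_def V'_def by auto
      qed
      ultimately show ?thesis by auto
    qed
  qed
  have cnt': "card V' + 3 = 4 * card (insert u3 S) + card (leaves V' E')"
  proof -
    have fl: "finite (leaves V E)" using fin unfolding leaves_def by auto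
    have vl: "v \<in> leaves V E" using v unfolding leaves_def by auto
    have "u4 \<notin> leaves V E - {v}" using n unfolding leaves_def by auto
    then have "card (leaves V' E') = Suc (card (leaves V E - {v}))" unfolding lv using fl by simp
    also have "\<dots> = card (leaves V E)"
    proof -
      have "card (leaves V E) > 0" using fl vl card_gt_0_iff by blast
      then show ?thesis using fl vl by (simp add: card_Diff_singleton)
    qed
    finally have L: "card (leaves V' E') = card (leaves V E)" .
    have "card V' = card V + 4" unfolding V'_def using fin n d by simp
    then show ?thesis using cnt L cS' unfolding S_def by simp
  qed
  have "Inv V' E' sta'"
    unfolding Inv_def SA'
    apply (intro conjI)
    subgoal by (rule fin')
    subgoal by (rule ein')
    subgoal by (rule dd')
    subgoal using lb' by blast
    subgoal using uq' by blast
    subgoal using iA' by blast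
    subgoal using iC' by blast
    subgoal using dA' by blast
    subgoal by (rule cnt')
    done
  then show ?thesis unfolding V'_def E'_def .
qed


lemma T1_Inv: assumes "T1 V E sta" shows "Inv V E sta"
  using assms
proof (induction rule: T1.induct)
  case (base a b c sta) then show ?case by (rule base_inv)
next
  case (op1 V E sta v u sta')
  show ?case by (rule op1_inv[OF op1.IH op1.hyps(2,3,4,5,6)])
next
  case (op3 V E sta v u1 u2 u3 u4 sta')
  show ?case by (rule op3_inv[OF op3.IH op3.hyps(2-14)])
qed

theorem lemma3p2:
  fixes V :: "'a set" and E :: "'a set set" and sta :: "'a \<Rightarrow> status"
  assumes "is_tree V E"
    and "card V \<ge> 3"
    and "T1 V E sta"
  shows "gamma_d2 V E = card {v \<in> V. sta v = SA}
       \<and> real (card {v \<in> V. sta v = SA}) = (real (card V) - real (card (leaves V E)) + 3) / 4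
       \<and> (\<forall>D. is_gamma_d2_set V E D \<longleftrightarrow> D = {v \<in> V. sta v = SA})"
proof -
  have I: "Inv V E sta" using T1_Inv assms(3) .
  define S where "S = {v \<in> V. sta v = SA}"
  have Seq: "SAs V sta = S" by (simp add: SAs_def S_def)
  note fin = InvD(1)[OF I] and dd = InvD(3)[OF I, unfolded Seq]
    and lb = InvD(4)[OF I, unfolded Seq] and uq = InvD(5)[OF I, unfolded Seq]
    and cnt = InvD(9)[OF I, unfolded Seq]
  have fset: "finite {card D | D. is_2DD V E D}"
  proof (rule finite_subset[of _ "{..card V}"])
    show "{card D | D. is_2DD V E D} \<subseteq> {..card V}"
      using fin card_mono unfolding is_2DD_def by fastforce
  qed auto
  have g: "gamma_d2 V E = card S" unfolding gamma_d2_def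
    by (rule Min_eqI) (use fset dd lb in auto)
  have r: "real (card V) + 3 = 4 * real (card S) + real (card (leaves V E))"
    using arg_cong[OF cnt, of real] by simp
  have "real (card S) = (real (card V) - real (card (leaves V E)) + 3) / 4"
    using r by simp
  moreover have "\<forall>D. is_gamma_d2_set V E D \<longleftrightarrow> D = S"
    unfolding is_gamma_d2_set_def g using dd uq by auto
  ultimately show ?thesis using g unfolding S_def by auto
qed

end
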